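(* Let $N\ge3$ and let $\psi$ be a positive (on $(0,\infty)$) $C^2$ function on $[0,\infty)$ with $\psi(0)=\psi''(0)=0$, $\psi'(0)=1$. Let $\tilde\Phi(r):=\left(\frac{r}{\psi(r)}\right)^{\frac{N-1}{2}}r^{\frac{2-N}{2}}$ for $r>0$. If $(N-2)\psi'(r)+(N-1)r\psi''(r)\ge0$ for all $r>0$, then $\tilde\Phi$ is non-increasing on $(0,\infty)$. *)

theory Defs
  imports "HOL-Analysis.Analysis"
begin

end

theory Submission
  imports Defs
begin

theorem lemma4p4:
  fixes N :: nat and \<psi> \<psi>' \<psi>'' :: "real \<Rightarrow> real"
  assumes N: "N \<ge> 3"
    and d1: "\<And>r. r \<ge> 0 \<Longrightarrow> (\<psi> has_real_derivative \<psi>' r) (at r within {0..})"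
    and d2: "\<And>r. r \<ge> 0 \<Longrightarrow> (\<psi>' has_real_derivative \<psi>'' r) (at r within {0..})"
    and c2: "continuous_on {0..} \<psi>''"
    and pos: "\<And>r. r > 0 \<Longrightarrow> \<psi> r > 0"
    and init: "\<psi> 0 = 0" "\<psi>'' 0 = 0" "\<psi>' 0 = 1"
    and cond: "\<And>r. r > 0 \<Longrightarrow> (real N - 2) * \<psi>' r + (real N - 1) * r * \<psi>'' r \<ge> 0"
  shows "antimono_on {0<..} (\<lambda>r. (r / \<psi> r) powr ((real N - 1) / 2) * r powr ((2 - real N) / 2))"
proof -
  have at0: "at x within {0..} = at x" if "x > 0" for x :: real
    using that by (intro at_within_interior) simp
  have D1: "(\<psi> has_real_derivative \<psi>' x) (at x)" if "x > 0" for x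
    using d1[of x] that at0[OF that] by simp
  have D2: "(\<psi>' has_real_derivative \<psi>'' x) (at x)" if "x > 0" for x
    using d2[of x] that at0[OF that] by simp
  define g where "g x = (real N - 1) * x * \<psi>' x - \<psi> x" for x
  have gD: "(g has_real_derivative ((real N - 1) * (\<psi>' x + x * \<psi>'' x) - \<psi>' x)) (at x within {0..})"
    if "x \<ge> 0" for x
    unfolding g_def[abs_def]
    using that by (auto intro!: derivative_eq_intros d1 d2 simp: algebra_simps)
  have gnn: "g x \<ge> 0" if xpos: "x > 0" for x
  proof -
    have "g 0 \<le> g x"
    proof (rule DERIV_nonneg_imp_increasing_open[of 0 x g])
      show "0 \<le> x" using xpos by simp
      fix y assume y: "0 < y" "y < x"
      show "\<exists>d. DERIV g y :> d \<and> d \<ge> 0"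
      proof (intro exI conjI)
        show "DERIV g y :> ((real N - 1) * (\<psi>' y + y * \<psi>'' y) - \<psi>' y)"
          using gD[of y] y at0[of y] by simp
        show "(real N - 1) * (\<psi>' y + y * \<psi>'' y) - \<psi>' y \<ge> 0"
          using cond[of y] y by (simp add: algebra_simps)
      qed
    next
      show "continuous_on {0..x} g"
        by (rule DERIV_continuous_on, rule has_field_derivative_subset[OF gD]) auto
    qed
    thus ?thesis using init by (simp add: g_def)
  qed
  define \<alpha> where "\<alpha> = (real N - 1) / 2"
  define \<beta> where "\<beta> = (2 - real N) / 2"
  define h where "h r = \<alpha> * (ln r - ln (\<psi> r)) + \<beta> * ln r" for r
  have eq: "(r / \<psi> r) powr ((real N - 1) / 2) * r powr ((2 - real N) / 2) = exp (h r)" if "r > 0" for r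
    using that pos[OF that]
    by (simp add: powr_def h_def \<alpha>_def \<beta>_def ln_div exp_add[symmetric] algebra_simps)
  have hD: "(h has_real_derivative (\<alpha> * (1 / x - \<psi>' x / \<psi> x) + \<beta> / x)) (at x)" if "x > 0" for x
    unfolding h_def[abs_def] using that pos[OF that]
    by (auto intro!: derivative_eq_intros D1 simp: field_simps)
  show ?thesis
  proof (rule monotone_onI)
    fix a b :: real assume ab: "a \<in> {0<..}" "b \<in> {0<..}" "a \<le> b"
    have "h b \<le> h a"
    proof (rule DERIV_nonpos_imp_decreasing_open[of a b h])
      show "a \<le> b" by fact
      fix x assume x: "a < x" "x < b"
      hence xp: "x > 0" using ab by auto
      have gx: "(real N - 1) * x * \<psi>' x \<ge> \<psi> x" using gnn[OF xp] by (simp add: g_def)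
      have "\<alpha> * (1 / x - \<psi>' x / \<psi> x) + \<beta> / x = (\<psi> x - (real N - 1) * x * \<psi>' x) / (2 * x * \<psi> x)"
        using xp pos[OF xp] by (simp add: \<alpha>_def \<beta>_def field_simps)
      also have "\<dots> \<le> 0" using gx xp pos[OF xp]
        by (intro divide_nonpos_pos) auto
      finally show "\<exists>y. DERIV h x :> y \<and> y \<le> 0" using hD[OF xp] by blast
    next
      show "continuous_on {a..b} h"
        by (rule DERIV_continuous_on, rule has_field_derivative_at_within[OF hD]) (use ab in auto)
    qed
    thus "(a / \<psi> a) powr ((real N - 1) / 2) * a powr ((2 - real N) / 2)
        \<ge> (b / \<psi> b) powr ((real N - 1) / 2) * b powr ((2 - real N) / 2)"
      using eq ab by simp
  qed
qed

end
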